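(* Let $X$ be a separable absolutely neighbourhood star-Menger space. If $Y$ is a closed and discrete subset of $X$, then $|Y|<\mathfrak{d}$.
   Context: All spaces are regular. $St(A,\mathcal{U})=\bigcup\{U\in\mathcal{U}:U\cap A\neq\emptyset\}$. $\mathfrak{d}$ is the dominating number. $X$ is absolutely neighbourhood star-Menger if for each sequence $(\mathcal{U}_n:n\in\omega)$ of open covers of $X$ and each dense subset $D$ of $X$ there is a sequence $(F_n:n\in\omega)$ of finite subsets of $D$ such that for any open sets $O_n$ with $F_n\subseteq O_n$ ($n\in\omega$), $\{St(O_n,\mathcal{U}_n):n\in\omega\}$ covers $X$. *)

theory Defs
  imports "HOL-Analysis.Analysis"
begin

definition St :: "'a set \<Rightarrow> 'a set set \<Rightarrow> 'a set" where
  "St A \<U> = \<Union>{U \<in> \<U>. U \<inter> A \<noteq> {}}"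

definition open_cover :: "'a topology \<Rightarrow> 'a set set \<Rightarrow> bool" where
  "open_cover X \<U> \<longleftrightarrow> (\<forall>U\<in>\<U>. openin X U) \<and> \<Union>\<U> = topspace X"

definition dense_in :: "'a topology \<Rightarrow> 'a set \<Rightarrow> bool" where
  "dense_in X D \<longleftrightarrow> D \<subseteq> topspace X \<and> X closure_of D = topspace X"

definition abs_nbhd_star_Menger :: "'a topology \<Rightarrow> bool" where
  "abs_nbhd_star_Menger X \<longleftrightarrow>
     (\<forall>\<U> :: nat \<Rightarrow> 'a set set. \<forall>D.
        (\<forall>n. open_cover X (\<U> n)) \<and> dense_in X D \<longrightarrow>
        (\<exists>F :: nat \<Rightarrow> 'a set. (\<forall>n. finite (F n) \<and> F n \<subseteq> D) \<and>
           (\<forall>W :: nat \<Rightarrow> 'a set. (\<forall>n. openin X (W n) \<and> F n \<subseteq> W n) \<longrightarrow>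
              topspace X \<subseteq> (\<Union>n. St (W n) (\<U> n)))))"

definition dominating :: "(nat \<Rightarrow> nat) set \<Rightarrow> bool" where
  "dominating \<D> \<longleftrightarrow> (\<forall>f. \<exists>g\<in>\<D>. \<forall>\<^sub>F n in sequentially. f n \<le> g n)"

text \<open>|Y| < d, where d is the least cardinality of a dominating family:
  equivalently |Y| is strictly below the cardinality of every dominating family.\<close>
definition card_less_dominating :: "'a set \<Rightarrow> bool" where
  "card_less_dominating Y \<longleftrightarrow> (\<forall>\<D>. dominating \<D> \<longrightarrow> ordLess2 (card_of Y) (card_of \<D>))"

end

theory Submission
  imports Defs
begin

lemma countable_not_dominating:
  assumes "countable \<D>" shows "\<not> dominating \<D>"
proof
  assume dom: "dominating \<D>"
  then have ne: "\<D> \<noteq> {}" unfolding dominating_def by blast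
  define e where "e = from_nat_into \<D>"
  have re: "range e = \<D>" unfolding e_def by (rule range_from_nat_into[OF ne assms])
  define g where "g n = Suc (\<Sum>i\<le>n. e i n)" for n
  obtain f where f: "f \<in> \<D>" and ev: "\<forall>\<^sub>F n in sequentially. g n \<le> f n"
    using dom unfolding dominating_def by blast
  obtain i where fi: "f = e i" using f re by blast
  obtain N where N: "\<And>n. n \<ge> N \<Longrightarrow> g n \<le> e i n" using ev fi unfolding eventually_sequentially by blast
  let ?n = "max N i"
  have "e i ?n \<le> (\<Sum>j\<le>?n. e j ?n)"
    by (rule member_le_sum) auto
  then have "e i ?n < g ?n" unfolding g_def by simp
  with N[of ?n] show False by simp
qed

context includes cardinal_syntax begin
lemma countable_card_of_nat: "countable A \<longleftrightarrow> |A| \<le>o |UNIV::nat set|"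
  unfolding countable_def card_of_ordLeq[symmetric] by auto

lemma card_part:
  assumes dom: "dominating \<D>" and nl: "\<not> ordLess2 (card_of Y) (card_of \<D>)" and cD: "countable D"
  shows "\<exists>\<phi>. \<phi> ` (Y - D) = \<D> \<times> (UNIV :: nat set)"
proof -
  have "|Y| <o |\<D>| \<or> |\<D>| \<le>o |Y|"
    by (rule ordLess_or_ordLeq[OF card_of_Well_order card_of_Well_order])
  then have le: "|\<D>| \<le>o |Y|" using nl by simp
  have unc: "\<not> countable \<D>" using countable_not_dominating[of \<D>] dom by blast
  have inf: "\<not> finite \<D>" using unc countable_finite by auto
  have ne: "\<D> \<noteq> {}" using inf by auto
  have "\<not> |\<D>| \<le>o |UNIV::nat set|" using unc by (simp add: countable_card_of_nat)
  moreover have "|UNIV::nat set| <o |\<D>| \<or> |\<D>| \<le>o |UNIV::nat set|"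
    by (rule ordLess_or_ordLeq[OF card_of_Well_order card_of_Well_order])
  ultimately have nD: "|UNIV::nat set| <o |\<D>|" by blast
  have cYD: "countable (Y \<inter> D)" using cD countable_subset[of "Y \<inter> D" D] by simp
  have YD: "\<not> countable (Y - D)"
  proof
    assume "countable (Y - D)"
    then have "countable ((Y - D) \<union> (Y \<inter> D))" using cYD by simp
    then have "countable Y" by (simp add: Un_Diff_Int)
    then have "|Y| \<le>o |UNIV::nat set|" by (simp add: countable_card_of_nat)
    then have "|\<D>| \<le>o |UNIV::nat set|" using le ordLeq_transitive by blast
    then show False using nD not_ordLess_ordLeq by blast
  qed
  have infYD: "\<not> finite (Y - D)" using YD countable_finite by auto
  have natYD: "|UNIV::nat set| \<le>o |Y - D|" by (rule infinite_iff_card_of_nat[THEN iffD1, OF infYD])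
  have "|Y \<inter> D| \<le>o |UNIV::nat set|" using cYD by (simp add: countable_card_of_nat)
  then have c1: "|Y \<inter> D| \<le>o |Y - D|" using natYD by (rule ordLeq_transitive)
  have "|(Y - D) \<union> (Y \<inter> D)| \<le>o |Y - D|"
  proof (rule card_of_Un_ordLeq_infinite_Field)
    show "\<not> finite (Field |Y - D| )" using infYD by (simp add: Field_card_of)
    show "|Y - D| \<le>o |Y - D|" by (rule ordLeq_refl[OF card_of_Card_order])
    show "|Y \<inter> D| \<le>o |Y - D|" by (rule c1)
    show "Card_order |Y - D|" by (rule card_of_Card_order)
  qed
  then have YleYD: "|Y| \<le>o |Y - D|" by (simp add: Un_Diff_Int)
  have nle: "|UNIV::nat set| \<le>o |\<D>|" using nD by (rule ordLess_imp_ordLeq)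
  have "|\<D> \<times> (UNIV::nat set)| =o |\<D>|" by (rule conjunct1[OF card_of_Times_infinite[OF inf UNIV_not_empty nle]])
  moreover have "|\<D>| \<le>o |Y - D|" using le YleYD by (rule ordLeq_transitive)
  ultimately have leq: "|\<D> \<times> (UNIV::nat set)| \<le>o |Y - D|" by (rule ordIso_ordLeq_trans)
  have ne2: "\<D> \<times> (UNIV::nat set) \<noteq> {}" using ne by simp
  show ?thesis by (rule card_of_ordLeq2[OF ne2, THEN iffD2, OF leq])
qed
end

lemma topo_part:
  fixes X :: "'a topology" and Y D :: "'a set" and \<phi> :: "'a \<Rightarrow> (nat \<Rightarrow> nat) \<times> nat"
  assumes H: "Hausdorff_space X" and M: "abs_nbhd_star_Menger X"
    and cY: "closedin X Y" and disc: "subtopology X Y = discrete_topology Y"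
    and cD: "countable D" and dD: "dense_in X D" and dom: "dominating \<D>"
    and phi: "\<phi> ` (Y - D) = \<D> \<times> (UNIV :: nat set)"
  shows False
proof -
  have Ysub: "Y \<subseteq> topspace X" using cY closedin_subset by blast
  have Dsub: "D \<subseteq> topspace X" using dD unfolding dense_in_def by blast
  have "\<forall>y\<in>Y. \<exists>U. openin X U \<and> U \<inter> Y = {y}"
  proof
    fix y assume y: "y \<in> Y"
    have "openin (subtopology X Y) {y}" using disc y by simp
    then obtain T where "openin X T" "{y} = T \<inter> Y" unfolding openin_subtopology by blast
    then show "\<exists>U. openin X U \<and> U \<inter> Y = {y}" by blast
  qed
  from bchoice[OF this] obtain U where U: "\<forall>y\<in>Y. openin X (U y) \<and> U y \<inter> Y = {y}" by blast
  define P where "P x y p \<longleftrightarrow> openin X (fst p) \<and> openin X (snd p) \<and> x \<in> fst p \<and> y \<in> snd p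
       \<and> disjnt (fst p) (snd p)" for x y and p :: "'a set \<times> 'a set"
  have ex: "\<exists>p. P x y p" if xyt: "x \<in> topspace X" "y \<in> topspace X" "x \<noteq> y" for x y
  proof -
    have hd: "\<forall>x y. x \<in> topspace X \<and> y \<in> topspace X \<and> (x \<noteq> y)
              \<longrightarrow> (\<exists>U V. openin X U \<and> openin X V \<and> x \<in> U \<and> y \<in> V \<and> disjnt U V)"
      using H unfolding Hausdorff_space_def .
    obtain S T where "openin X S" "openin X T" "x \<in> S" "y \<in> T" "disjnt S T"
      using hd[rule_format, OF conjI[OF xyt(1) conjI[OF xyt(2) xyt(3)]]] by blast
    then have "P x y (S, T)" unfolding P_def by simp
    then show ?thesis by blast
  qed
  define A where "A x y = fst (SOME p. P x y p)" for x y
  define B where "B x y = snd (SOME p. P x y p)" for x y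
  have AB: "openin X (A x y) \<and> openin X (B x y) \<and> x \<in> A x y \<and> y \<in> B x y \<and> disjnt (A x y) (B x y)"
    if "x \<in> topspace X" "y \<in> topspace X" "x \<noteq> y" for x y
  proof -
    have "P x y (SOME p. P x y p)" using someI_ex[OF ex[OF that]] .
    then show ?thesis unfolding P_def A_def B_def by blast
  qed
  define idx where "idx = to_nat_on D"
  have inj: "inj_on idx D" unfolding idx_def using cD by (rule inj_on_to_nat_on)
  define K where "K m = {d\<in>D. idx d \<le> m}" for m
  have KD: "K m \<subseteq> D" for m unfolding K_def by blast
  have finK: "finite (K m)" for m
  proof -
    have "idx ` K m \<subseteq> {..m}" unfolding K_def by auto
    then have "finite (idx ` K m)" using finite_subset by blast
    moreover have "inj_on idx (K m)" using inj KD by (rule inj_on_subset)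
    ultimately show ?thesis by (rule finite_imageD)
  qed
  define h where "h y n = fst (\<phi> y) n + snd (\<phi> y)" for y n
  define V where "V y n = U y \<inter> (\<Inter>d \<in> K (h y n) - {y}. B d y)" for y n
  have Vopen: "openin X (V y n)" if y: "y \<in> Y" for y n
  proof -
    have o1: "openin X ((\<Inter>d \<in> K (h y n) - {y}. B d y) \<inter> topspace X)"
    proof (rule openin_INT)
      show "finite (K (h y n) - {y})" using finK by blast
      fix d assume d: "d \<in> K (h y n) - {y}"
      have "d \<in> topspace X" using d KD Dsub by blast
      moreover have "y \<in> topspace X" using y Ysub by blast
      ultimately show "openin X (B d y)" using AB d by blast
    qed
    have Uy: "openin X (U y)" using U y by blast
    then have "U y \<subseteq> topspace X" by (rule openin_subset)
    then have "V y n = U y \<inter> ((\<Inter>d \<in> K (h y n) - {y}. B d y) \<inter> topspace X)"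
      unfolding V_def by blast
    then show ?thesis using openin_Int[OF Uy o1] by simp
  qed
  have yV: "y \<in> V y n" if y: "y \<in> Y" for y n
  proof -
    have "y \<in> U y" using U y by blast
    moreover have "y \<in> B d y" if d: "d \<in> K (h y n) - {y}" for d
    proof -
      have "d \<in> topspace X" using d KD Dsub by blast
      moreover have "y \<in> topspace X" using y Ysub by blast
      ultimately show ?thesis using AB d by blast
    qed
    ultimately show ?thesis unfolding V_def by blast
  qed
  define \<U> where "\<U> n = insert (topspace X - Y) ((\<lambda>y. V y n) ` Y)" for n
  have cov: "open_cover X (\<U> n)" for n
  proof -
    have op: "\<forall>T\<in>\<U> n. openin X T" unfolding \<U>_def using Vopen cY by auto
    moreover have "\<Union>(\<U> n) = topspace X"
    proof
      show "\<Union>(\<U> n) \<subseteq> topspace X" using op openin_subset by blast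
      show "topspace X \<subseteq> \<Union>(\<U> n)" unfolding \<U>_def using yV by blast
    qed
    ultimately show ?thesis unfolding open_cover_def by blast
  qed
  have "\<exists>F :: nat \<Rightarrow> 'a set. (\<forall>n. finite (F n) \<and> F n \<subseteq> D) \<and>
           (\<forall>W :: nat \<Rightarrow> 'a set. (\<forall>n. openin X (W n) \<and> F n \<subseteq> W n) \<longrightarrow>
              topspace X \<subseteq> (\<Union>n. St (W n) (\<U> n)))"
    using M cov dD unfolding abs_nbhd_star_Menger_def by blast
  then obtain F where F: "\<forall>n. finite (F n) \<and> F n \<subseteq> D"
    and FW: "\<forall>W :: nat \<Rightarrow> 'a set. (\<forall>n. openin X (W n) \<and> F n \<subseteq> W n) \<longrightarrow> topspace X \<subseteq> (\<Union>n. St (W n) (\<U> n))"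
    by blast
  define g where "g n = (\<Sum>d\<in>F n. idx d)" for n
  obtain f where f: "f \<in> \<D>" and ev: "\<forall>\<^sub>F n in sequentially. g n \<le> f n"
    using dom unfolding dominating_def by blast
  obtain N where N: "\<And>n. n \<ge> N \<Longrightarrow> g n \<le> f n" using ev unfolding eventually_sequentially by blast
  define k where "k = (\<Sum>n<N. g n)"
  have gle: "g n \<le> f n + k" for n
  proof (cases "n < N")
    case True
    then have "g n \<le> k" unfolding k_def by (intro member_le_sum) auto
    then show ?thesis by simp
  next
    case False
    then show ?thesis using N[of n] by simp
  qed
  have "(f, k) \<in> \<phi> ` (Y - D)" using phi f by simp
  then obtain y where y: "y \<in> Y" "y \<notin> D" and py: "\<phi> y = (f, k)" by force
  have hy: "g n \<le> h y n" for n unfolding h_def py using gle by simp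
  have FK: "F n \<subseteq> K (h y n)" for n
  proof
    fix d assume d: "d \<in> F n"
    have fin: "finite (F n)" using F by blast
    have "idx d \<le> g n" unfolding g_def using fin d by (intro member_le_sum) auto
    moreover have "d \<in> D" using F d by blast
    ultimately show "d \<in> K (h y n)" unfolding K_def using hy[of n] by simp
  qed
  define W where "W n = \<Union>((\<lambda>d. A d y) ` F n)" for n
  have yt: "y \<in> topspace X" using y Ysub by blast
  have dy: "d \<in> topspace X \<and> d \<noteq> y" if "d \<in> F n" for d n using that F y Dsub by blast
  have "\<forall>n. openin X (W n) \<and> F n \<subseteq> W n"
  proof
    fix n
    have "openin X (W n)" unfolding W_def
    proof (rule openin_Union)
      fix S assume "S \<in> (\<lambda>d. A d y) ` F n"
      then obtain d where "d \<in> F n" "S = A d y" by blast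
      then show "openin X S" using AB dy yt by blast
    qed
    moreover have "F n \<subseteq> W n" unfolding W_def using AB dy yt by blast
    ultimately show "openin X (W n) \<and> F n \<subseteq> W n" by blast
  qed
  then have "topspace X \<subseteq> (\<Union>n. St (W n) (\<U> n))" using FW by blast
  then obtain n where "y \<in> St (W n) (\<U> n)" using yt by blast
  then obtain T where T: "T \<in> \<U> n" "T \<inter> W n \<noteq> {}" "y \<in> T" unfolding St_def by blast
  then obtain y' where y': "y' \<in> Y" "T = V y' n" using y unfolding \<U>_def by auto
  have "y \<in> U y' \<inter> Y" using T(3) y y' unfolding V_def by blast
  moreover have "U y' \<inter> Y = {y'}" using U y'(1) by blast
  ultimately have "y' = y" by simp
  then have TV: "T = V y n" using y' by simp
  obtain z d where z: "z \<in> T" "d \<in> F n" "z \<in> A d y" using T(2) unfolding W_def by blast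
  have "d \<in> K (h y n) - {y}" using FK z(2) dy[OF z(2)] by blast
  then have "z \<in> B d y" using z(1) TV unfolding V_def by blast
  moreover have "disjnt (A d y) (B d y)" using AB dy[OF z(2)] yt by blast
  ultimately show False using z(3) by (simp add: disjnt_iff)
qed

theorem mainTheorem8:
  fixes X :: "'a topology" and Y :: "'a set"
  assumes "regular_space X" and "t1_space X"
    and "separable_space X"
    and "abs_nbhd_star_Menger X"
    and "closedin X Y"
    and "subtopology X Y = discrete_topology Y"
  shows "card_less_dominating Y"
  unfolding card_less_dominating_def
proof (intro allI impI)
  fix \<D> assume dom: "dominating \<D>"
  show "ordLess2 (card_of Y) (card_of \<D>)"
  proof (rule ccontr)
    assume nl: "\<not> ordLess2 (card_of Y) (card_of \<D>)"
    obtain D where D: "countable D" "D \<subseteq> topspace X" "X closure_of D = topspace X"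
      using assms(3) unfolding separable_space_def by blast
    then have dD: "dense_in X D" unfolding dense_in_def by blast
    obtain \<phi> where phi: "\<phi> ` (Y - D) = \<D> \<times> (UNIV :: nat set)"
      using card_part[OF dom nl D(1)] by blast
    have H: "Hausdorff_space X" using assms(1,2) regular_t1_imp_Hausdorff_space by blast
    show False using topo_part[OF H assms(4) assms(5) assms(6) D(1) dD dom phi] .
  qed
qed

end
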